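(* Let $\mathcal{D}(x)$, $x\in\mathbb{R}^n$, be probability distributions on $\mathbb{R}^m$ with finite first moments satisfying $\epsilon$-sensitivity: $W_1(\mathcal{D}(x),\mathcal{D}(y))\le\epsilon\|x-y\|_2$ for all $x,y$. Let $l:\mathbb{R}^n\times\mathbb{R}^m\to\mathbb{R}$ be such that for every $v$, $x\mapsto l(x,v)$ is convex and differentiable; $|l(x,v_1)-l(x,v_2)|\le L^c_2\|v_1-v_2\|$ for all $x,v_1,v_2$; $\|\nabla_x l(x,v)\|\le L^c_3$ for all $x,v$; and all expectations below are finite with differentiation and expectation over $v$ interchangeable. Let $F(x)=\mathbb{E}_{v\sim\mathcal{D}(x)}[l(x,v)]$, let $x^*$ be a minimizer of $F$ over $\mathbb{R}^n$, and let $(x^r)$ be defined by $x^{r+1}=x^r-\eta^r\,\mathbb{E}_{v\sim\mathcal{D}(x^r)}[\nabla_x l(x^r,v)]$ with step sizes $\eta^r>0$. Then for every $k\ge0$, $$\min_{0\le r\le k}\{F(x^r)-F(x^* )\}\le\frac{\epsilon L^c_2\sum_{r=0}^k\eta^r\|x^*-x^r\|}{\sum_{r=0}^k\eta^r}+\frac{\|x^0-x^*\|^2+(L^c_3)^2\sum_{r=0}^k(\eta^r)^2}{2\sum_{r=0}^k\eta^r}.$$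
   Context: $W_1$ denotes the 1-Wasserstein distance. $\mathcal{D}(x)$ is the decision-dependent distribution of the random parameter $v$ under decision $x$. The sequence $(x^r)$ is the infinite-sample limit of the Approximate Gradient Descent iteration, whose update direction is the expected gradient $\mathbb{E}_{v\sim\mathcal{D}(x)}[\nabla_x l(x,v)]$ rather than the gradient of $F$. *)

theory Defs
  imports "HOL-Probability.Probability"
begin

definition couplings :: "'b::euclidean_space measure \<Rightarrow> 'b measure \<Rightarrow> ('b \<times> 'b) measure set" where
  "couplings \<mu> \<nu> = {\<pi>. prob_space \<pi> \<and> sets \<pi> = sets borel \<and>
      distr \<pi> borel fst = \<mu> \<and> distr \<pi> borel snd = \<nu>}"

definition W1 :: "'b::euclidean_space measure \<Rightarrow> 'b measure \<Rightarrow> ennreal" where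
  "W1 \<mu> \<nu> = (INF \<pi> \<in> couplings \<mu> \<nu>. \<integral>\<^sup>+ p. ennreal (dist (fst p) (snd p)) \<partial>\<pi>)"

definition grad :: "('a::euclidean_space \<Rightarrow> real) \<Rightarrow> 'a \<Rightarrow> 'a" where
  "grad f x = (SOME D. GDERIV f x :> D)"

end

theory Submission imports Defs begin

lemma grad_exists:
  fixes f :: "'a::euclidean_space \<Rightarrow> real"
  assumes "f differentiable (at x)"
  shows "GDERIV f x :> grad f x"
proof -
  obtain f' where d: "(f has_derivative f') (at x)" using assms differentiable_def by blast
  have lin: "linear f'" using d has_derivative_linear by blast
  define g where "g = (\<Sum>b\<in>Basis. f' b *\<^sub>R b)"
  have "f' h = h \<bullet> g" for h
  proof -
    have "f' h = f' (\<Sum>b\<in>Basis. (h \<bullet> b) *\<^sub>R b)" by (simp add: euclidean_representation)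
    also have "\<dots> = (\<Sum>b\<in>Basis. (h \<bullet> b) * f' b)"
      using lin by (simp add: linear_sum linear_scale)
    also have "\<dots> = h \<bullet> g" unfolding g_def by (simp add: inner_sum_right mult.commute)
    finally show ?thesis .
  qed
  hence "f' = (\<lambda>h. h \<bullet> g)" by auto
  hence "GDERIV f x :> g" using d unfolding gderiv_def by simp
  thus ?thesis unfolding grad_def by (rule someI)
qed

lemma grad_tangent:
  fixes f :: "'a::euclidean_space \<Rightarrow> real"
  assumes cv: "convex_on UNIV f" and dif: "f differentiable (at x)"
  shows "f x + grad f x \<bullet> (y - x) \<le> f y"
proof -
  have G: "(f has_derivative (\<lambda>h. h \<bullet> grad f x)) (at x)"
    using grad_exists[OF dif] unfolding gderiv_def .
  define \<phi> where "\<phi> t = f (x + t *\<^sub>R (y - x))" for t :: real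
  have H: "((\<lambda>t. x + t *\<^sub>R (y - x)) has_derivative (\<lambda>t. t *\<^sub>R (y - x))) (at 0)"
    by (auto intro!: derivative_eq_intros)
  have G': "(f has_derivative (\<lambda>h. h \<bullet> grad f x)) (at ((\<lambda>t. x + t *\<^sub>R (y - x)) 0))"
    using G by simp
  have "(\<phi> has_derivative (\<lambda>t. (t *\<^sub>R (y - x)) \<bullet> grad f x)) (at 0)"
    using has_derivative_compose[OF H G'] unfolding \<phi>_def .
  hence D: "(\<phi> has_field_derivative ((y - x) \<bullet> grad f x)) (at 0 within UNIV)"
    unfolding has_field_derivative_def
  proof -
    assume a: "(\<phi> has_derivative (\<lambda>t. (t *\<^sub>R (y - x)) \<bullet> grad f x)) (at 0)"
    have "(\<lambda>t. (t *\<^sub>R (y - x)) \<bullet> grad f x) = (*) ((y - x) \<bullet> grad f x)" by (rule ext) simp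
    with a show "(\<phi> has_derivative (*) ((y - x) \<bullet> grad f x)) (at 0 within UNIV)" by simp
  qed
  have C: "convex_on UNIV \<phi>"
  proof (rule convex_onI)
    fix t a b :: real assume t: "0 < t" "t < 1"
    have "x + ((1 - t) *\<^sub>R a + t *\<^sub>R b) *\<^sub>R (y - x)
        = (1 - t) *\<^sub>R (x + a *\<^sub>R (y - x)) + t *\<^sub>R (x + b *\<^sub>R (y - x))"
      by (simp add: algebra_simps)
    thus "\<phi> ((1 - t) *\<^sub>R a + t *\<^sub>R b) \<le> (1 - t) * \<phi> a + t * \<phi> b"
      unfolding \<phi>_def using convex_onD[OF cv, of t] t by simp
  qed simp
  have "\<phi> 1 - \<phi> 0 \<ge> ((y - x) \<bullet> grad f x) * (1 - 0)"
    by (rule convex_on_imp_above_tangent[OF C _ _ _ D]) auto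
  thus ?thesis unfolding \<phi>_def by (simp add: inner_commute)
qed

lemma coupling_bound:
  fixes f :: "'b::euclidean_space \<Rightarrow> real" and \<mu> \<nu> :: "'b measure"
  assumes sm: "sets \<mu> = sets borel" "sets \<nu> = sets borel"
   and fi: "integrable \<mu> f" "integrable \<nu> f"
   and lip: "\<And>a b. \<bar>f a - f b\<bar> \<le> L * norm (a - b)" and L: "L \<ge> 0"
   and W: "W1 \<mu> \<nu> \<le> ennreal c" and c: "c \<ge> 0"
  shows "integral\<^sup>L \<mu> f - integral\<^sup>L \<nu> f \<le> L * c"
proof (rule field_le_epsilon)
  fix e :: real assume e: "0 < e"
  define d where "d = e / (L + 1)"
  have d: "d > 0" using e L unfolding d_def by simp
  have Ld: "L * d \<le> e" using e L unfolding d_def by (simp add: field_simps)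
  have "ennreal c < ennreal (c + d)" using c d by (intro ennreal_lessI) auto
  with W have "W1 \<mu> \<nu> < ennreal (c + d)" by (rule le_less_trans)
  then obtain \<pi> where \<pi>: "\<pi> \<in> couplings \<mu> \<nu>"
     and lt: "(\<integral>\<^sup>+ p. ennreal (dist (fst p) (snd p)) \<partial>\<pi>) < ennreal (c + d)"
    unfolding W1_def INF_less_iff by blast
  have ps: "prob_space \<pi>" and sp: "sets \<pi> = sets borel"
    and m1: "distr \<pi> borel fst = \<mu>" and m2: "distr \<pi> borel snd = \<nu>"
    using \<pi> unfolding couplings_def by auto
  have fb: "f \<in> borel_measurable borel"
    using borel_measurable_integrable[OF fi(1)] measurable_cong_sets[OF sm(1) refl] by blast
  have bf: "fst \<in> measurable (borel::('b\<times>'b) measure) borel"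
    using measurable_fst[of "borel::'b measure" "borel::'b measure"] unfolding borel_prod .
  have bs: "snd \<in> measurable (borel::('b\<times>'b) measure) borel"
    using measurable_snd[of "borel::'b measure" "borel::'b measure"] unfolding borel_prod .
  have mfst: "fst \<in> measurable \<pi> borel"
    using measurable_cong_sets[OF sp refl] bf by blast
  have msnd: "snd \<in> measurable \<pi> borel"
    using measurable_cong_sets[OF sp refl] bs by blast
  have i1: "integrable \<pi> (\<lambda>p. f (fst p))"
    using fi(1) integrable_distr_eq[OF mfst fb] m1 by simp
  have i2: "integrable \<pi> (\<lambda>p. f (snd p))"
    using fi(2) integrable_distr_eq[OF msnd fb] m2 by simp
  have e1: "integral\<^sup>L \<mu> f = (\<integral>p. f (fst p) \<partial>\<pi>)"
    using integral_distr[OF mfst fb] m1 by simp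
  have e2: "integral\<^sup>L \<nu> f = (\<integral>p. f (snd p) \<partial>\<pi>)"
    using integral_distr[OF msnd fb] m2 by simp
  have dm: "(\<lambda>p. dist (fst p) (snd p)) \<in> borel_measurable \<pi>"
    using borel_measurable_dist[OF mfst msnd] .
  have fin: "(\<integral>\<^sup>+ p. ennreal (dist (fst p) (snd p)) \<partial>\<pi>) < \<infinity>"
    using order.strict_trans[OF lt ennreal_less_top] by simp
  have idist: "integrable \<pi> (\<lambda>p. dist (fst p) (snd p))"
    using dm fin by (intro integrableI_nonneg) auto
  have "(\<integral>p. dist (fst p) (snd p) \<partial>\<pi>) = enn2real (\<integral>\<^sup>+ p. ennreal (dist (fst p) (snd p)) \<partial>\<pi>)"
    using dm by (intro integral_eq_nn_integral) auto
  also have "\<dots> \<le> enn2real (ennreal (c + d))"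
    using lt by (intro enn2real_mono) auto
  also have "\<dots> = c + d" using c d by simp
  finally have di: "(\<integral>p. dist (fst p) (snd p) \<partial>\<pi>) \<le> c + d" .
  have "integral\<^sup>L \<mu> f - integral\<^sup>L \<nu> f = (\<integral>p. f (fst p) - f (snd p) \<partial>\<pi>)"
    using e1 e2 i1 i2 by simp
  also have "\<dots> \<le> (\<integral>p. L * dist (fst p) (snd p) \<partial>\<pi>)"
    using i1 i2 idist lip by (intro integral_mono) (auto simp: dist_norm abs_le_iff)
  also have "\<dots> = L * (\<integral>p. dist (fst p) (snd p) \<partial>\<pi>)" by simp
  also have "\<dots> \<le> L * (c + d)" using di L by (rule mult_left_mono)
  also have "\<dots> \<le> L * c + e" using Ld by (simp add: distrib_left)
  finally show "integral\<^sup>L \<mu> f - integral\<^sup>L \<nu> f \<le> L * c + e" .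
qed

theorem theorem2:
  fixes D :: "'a::euclidean_space \<Rightarrow> 'b::euclidean_space measure"
    and l :: "'a \<Rightarrow> 'b \<Rightarrow> real"
    and \<epsilon> L2 L3 :: real
    and xstar :: 'a
    and xs :: "nat \<Rightarrow> 'a"
    and \<eta> :: "nat \<Rightarrow> real"
    and k :: nat
  assumes prob: "\<And>x. prob_space (D x)"
    and sets_D: "\<And>x. sets (D x) = sets borel"
    and moment: "\<And>x. integrable (D x) (\<lambda>v. norm v)"
    and eps_nonneg: "\<epsilon> \<ge> 0"
    and sensitive: "\<And>x y. W1 (D x) (D y) \<le> ennreal (\<epsilon> * norm (x - y))"
    and convex: "\<And>v. convex_on UNIV (\<lambda>x. l x v)"
    and differentiable: "\<And>x v. (\<lambda>z. l z v) differentiable (at x)"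
    and lip_v: "\<And>x v1 v2. \<bar>l x v1 - l x v2\<bar> \<le> L2 * norm (v1 - v2)"
    and grad_bound: "\<And>x v. norm (grad (\<lambda>z. l z v) x) \<le> L3"
    and int_l: "\<And>x y. integrable (D y) (\<lambda>v. l x v)"
    and int_grad: "\<And>x y. integrable (D y) (\<lambda>v. grad (\<lambda>z. l z v) x)"
    and interchange: "\<And>x y. GDERIV (\<lambda>z. \<integral>v. l z v \<partial>D y) x :>
                                (\<integral>v. grad (\<lambda>z. l z v) x \<partial>D y)"
    and minimizer: "\<And>z. (\<integral>v. l xstar v \<partial>D xstar) \<le> (\<integral>v. l z v \<partial>D z)"
    and step_pos: "\<And>r. \<eta> r > 0"
    and iter: "\<And>r. xs (Suc r) = xs r - \<eta> r *\<^sub>R (\<integral>v. grad (\<lambda>z. l z v) (xs r) \<partial>D (xs r))"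
  shows "(MIN r\<in>{0..k}. (\<integral>v. l (xs r) v \<partial>D (xs r)) - (\<integral>v. l xstar v \<partial>D xstar))
          \<le> \<epsilon> * L2 * (\<Sum>r=0..k. \<eta> r * norm (xstar - xs r)) / (\<Sum>r=0..k. \<eta> r)
            + (norm (xs 0 - xstar)^2 + L3^2 * (\<Sum>r=0..k. (\<eta> r)^2)) / (2 * (\<Sum>r=0..k. \<eta> r))"
proof -
  define F where "F r = (\<integral>v. l (xs r) v \<partial>D (xs r)) - (\<integral>v. l xstar v \<partial>D xstar)" for r
  define g where "g r = (\<integral>v. grad (\<lambda>z. l z v) (xs r) \<partial>D (xs r))" for r
  define d where "d r = norm (xs r - xstar)" for r
  have L2: "L2 \<ge> 0"
  proof -
    obtain b :: 'b where b: "b \<in> Basis" using nonempty_Basis by blast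
    have "\<bar>l xstar 0 - l xstar b\<bar> \<le> L2 * norm (0 - b)" by (rule lip_v)
    thus ?thesis using b by simp
  qed
  have step1: "F r \<le> \<epsilon> * L2 * norm (xstar - xs r) + g r \<bullet> (xs r - xstar)" for r
  proof -
    have tan: "l (xs r) v + grad (\<lambda>z. l z v) (xs r) \<bullet> (xstar - xs r) \<le> l xstar v" for v
      using grad_tangent[OF convex differentiable] .
    have "(\<integral>v. l (xs r) v + grad (\<lambda>z. l z v) (xs r) \<bullet> (xstar - xs r) \<partial>D (xs r))
          \<le> (\<integral>v. l xstar v \<partial>D (xs r))"
      using tan int_l int_grad by (intro integral_mono) auto
    moreover have "(\<integral>v. l (xs r) v + grad (\<lambda>z. l z v) (xs r) \<bullet> (xstar - xs r) \<partial>D (xs r))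
          = (\<integral>v. l (xs r) v \<partial>D (xs r)) + g r \<bullet> (xstar - xs r)"
      unfolding g_def
      by (simp add: Bochner_Integration.integral_add[OF int_l integrable_inner_left[OF int_grad]] int_grad)
    ultimately have A: "(\<integral>v. l (xs r) v \<partial>D (xs r)) + g r \<bullet> (xstar - xs r) \<le> (\<integral>v. l xstar v \<partial>D (xs r))"
      by simp
    have B: "(\<integral>v. l xstar v \<partial>D (xs r)) - (\<integral>v. l xstar v \<partial>D xstar) \<le> L2 * (\<epsilon> * norm (xs r - xstar))"
      by (rule coupling_bound[OF sets_D sets_D int_l int_l lip_v L2 sensitive])
         (simp add: eps_nonneg)
    have "g r \<bullet> (xstar - xs r) = - (g r \<bullet> (xs r - xstar))" by (simp add: inner_diff_right)
    with A B show ?thesis unfolding F_def by (simp add: norm_minus_commute algebra_simps)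
  qed
  have gb: "norm (g r) \<le> L3" for r
  proof -
    interpret P: prob_space "D (xs r)" by (rule prob)
    have "norm (g r) \<le> (\<integral>v. norm (grad (\<lambda>z. l z v) (xs r)) \<partial>D (xs r))"
      unfolding g_def by (rule integral_norm_bound)
    also have "\<dots> \<le> (\<integral>v. L3 \<partial>D (xs r))"
      using int_grad grad_bound by (intro integral_mono) auto
    also have "\<dots> = L3" by (simp add: P.prob_space)
    finally show ?thesis .
  qed
  have step2: "\<eta> r * (g r \<bullet> (xs r - xstar)) \<le> ((d r)^2 - (d (Suc r))^2) / 2 + (\<eta> r)^2 * L3^2 / 2" for r
  proof -
    have e: "xs (Suc r) - xstar = (xs r - xstar) - \<eta> r *\<^sub>R g r" using iter[of r] unfolding g_def by simp
    have nrm: "norm (u - t *\<^sub>R w)^2 = norm u^2 - 2*t*(w \<bullet> u) + t^2 * norm w^2" for u w :: 'a and t :: real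
      unfolding power2_norm_eq_inner by (simp add: inner_diff_left inner_diff_right inner_commute power2_eq_square algebra_simps)
    have "(d (Suc r))^2 = (d r)^2 - 2 * \<eta> r * (g r \<bullet> (xs r - xstar)) + (\<eta> r)^2 * (norm (g r))^2"
      unfolding d_def e by (rule nrm)
    moreover have "(norm (g r))^2 \<le> L3^2" using gb[of r] by (simp add: power_mono)
    moreover have "(\<eta> r)^2 \<ge> 0" by simp
    ultimately have "(\<eta> r)^2 * (norm (g r))^2 \<le> (\<eta> r)^2 * L3^2" by (intro mult_left_mono)
    note bnd = this
    have aux: "B = A - 2*T + Q \<Longrightarrow> Q \<le> P \<Longrightarrow> T \<le> (A - B)/2 + P/2" for A B T Q P :: real by (simp add: field_simps)
    have E': "(d (Suc r))^2 = (d r)^2 - 2 * (\<eta> r * (g r \<bullet> (xs r - xstar))) + (\<eta> r)^2 * (norm (g r))^2"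
      using \<open>(d (Suc r))^2 = _\<close> by (simp add: mult.assoc)
    show ?thesis by (rule aux[OF E' bnd])
  qed
  have step3: "\<eta> r * F r \<le> \<epsilon> * L2 * (\<eta> r * norm (xstar - xs r)) + ((d r)^2 - (d (Suc r))^2) / 2 + (\<eta> r)^2 * L3^2 / 2" for r
  proof -
    have "\<eta> r * F r \<le> \<eta> r * (\<epsilon> * L2 * norm (xstar - xs r) + g r \<bullet> (xs r - xstar))"
      using step1[of r] step_pos[of r] by (intro mult_left_mono) auto
    thus ?thesis using step2[of r] by (simp add: algebra_simps)
  qed
  have sum: "(\<Sum>r=0..n. \<eta> r * F r) \<le> \<epsilon> * L2 * (\<Sum>r=0..n. \<eta> r * norm (xstar - xs r))
      + ((d 0)^2 - (d (Suc n))^2) / 2 + L3^2 * (\<Sum>r=0..n. (\<eta> r)^2) / 2" for n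
  proof (induction n)
    case 0 thus ?case using step3[of 0] by (simp add: algebra_simps)
  next
    case (Suc n)
    have aux: "X \<le> a1 + (d0 - dn)/2 + b1/2 \<Longrightarrow> Y \<le> a2 + (dn - dm)/2 + b2/2 \<Longrightarrow>
        Y + X \<le> (a2 + a1) + (d0 - dm)/2 + (b2 + b1)/2" for X Y a1 a2 d0 dn dm b1 b2 :: real
      by (simp add: field_simps)
    have "(\<Sum>r=0..Suc n. \<eta> r * F r) = \<eta> (Suc n) * F (Suc n) + (\<Sum>r=0..n. \<eta> r * F r)" by simp
    also have "\<dots> \<le> (\<epsilon> * L2 * (\<eta> (Suc n) * norm (xstar - xs (Suc n))) + \<epsilon> * L2 * (\<Sum>r=0..n. \<eta> r * norm (xstar - xs r)))
       + ((d 0)^2 - (d (Suc (Suc n)))^2) / 2 + ((\<eta> (Suc n))^2 * L3^2 + L3^2 * (\<Sum>r=0..n. (\<eta> r)^2)) / 2"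
      by (rule aux[OF Suc.IH step3[of "Suc n"]])
    also have "\<dots> = \<epsilon> * L2 * (\<Sum>r=0..Suc n. \<eta> r * norm (xstar - xs r))
      + ((d 0)^2 - (d (Suc (Suc n)))^2) / 2 + L3^2 * (\<Sum>r=0..Suc n. (\<eta> r)^2) / 2"
      by (simp add: algebra_simps)
    finally show ?case .
  qed
  define S where "S = (\<Sum>r=0..k. \<eta> r)"
  have S: "S > 0" unfolding S_def using step_pos by (intro sum_pos) auto
  define m where "m = (MIN r\<in>{0..k}. F r)"
  have mle: "m \<le> F r" if "r \<in> {0..k}" for r unfolding m_def using that by simp
  have "m * S = (\<Sum>r=0..k. \<eta> r * m)" unfolding S_def by (simp add: sum_distrib_left mult.commute)
  also have "\<dots> \<le> (\<Sum>r=0..k. \<eta> r * F r)"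
    using mle step_pos by (intro sum_mono mult_left_mono) (auto simp: less_imp_le)
  also have "\<dots> \<le> \<epsilon> * L2 * (\<Sum>r=0..k. \<eta> r * norm (xstar - xs r))
      + (d 0)^2 / 2 + L3^2 * (\<Sum>r=0..k. (\<eta> r)^2) / 2"
  proof -
    have aux: "X \<le> a + (p - q)/2 + b \<Longrightarrow> 0 \<le> q \<Longrightarrow> X \<le> a + p/2 + b" for X a p q b :: real
      by (simp add: field_simps)
    show ?thesis by (rule aux[OF sum[of k] zero_le_power2])
  qed
  finally have ms: "m * S \<le> \<epsilon> * L2 * (\<Sum>r=0..k. \<eta> r * norm (xstar - xs r))
      + (d 0)^2 / 2 + L3^2 * (\<Sum>r=0..k. (\<eta> r)^2) / 2" .
  have "m \<le> \<epsilon> * L2 * (\<Sum>r=0..k. \<eta> r * norm (xstar - xs r)) / S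
            + ((d 0)^2 + L3^2 * (\<Sum>r=0..k. (\<eta> r)^2)) / (2 * S)"
    using ms S by (simp add: field_simps)
  thus ?thesis unfolding m_def F_def S_def d_def .
qed
end
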